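(* Let $q$ be a prime power, $n\ge k\ge0$ integers, $V_1,\dots,V_\ell$ subspaces of $\mathbb{F}_q^n$ each of dimension at most $k$, and $\delta_1,\dots,\delta_\ell\ge0$ integers. The following are equivalent: (i) for every nonempty $\Omega\subseteq[\ell]$, $\dim\big(\bigcap_{i\in\Omega}V_i\big)\le k-\sum_{i\in\Omega}\delta_i$; (ii) $\sum_{i=1}^\ell\delta_i\le k$ and the $k$-tuple $(T_1,\dots,T_k)$ consisting of $\delta_i$ copies of $V_i$ for each $i\in[\ell]$ together with $k-\sum_{i=1}^\ell\delta_i$ additional copies of $\{0\}$ is a generic kernel pattern, i.e. $\dim\big(\bigcap_{i\in\Omega'}T_i\big)\le k-|\Omega'|$ for every nonempty $\Omega'\subseteq[k]$.
   Context: The copies are counted as distinct entries of the tuple: the set of positions holding copies of $V_i$ is disjoint from the positions holding copies of any other $V_{i'}$ (even if $V_i=V_{i'}$) and from the positions of the additional copies of $\{0\}$ (even if $V_i=\{0\}$). *)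

theory Defs
  imports "HOL-Analysis.Analysis"
begin

text \<open>Vectors of F_q^n are modelled as 'a ^ 'n with 'a a finite field (q = CARD('a));
  subspaces and dimension are taken w.r.t. the library vector space structure vec
  (scalar multiplication *s) over the field 'a.\<close>

definition generic_kernel_pattern :: "nat \<Rightarrow> (nat \<Rightarrow> ('a::field ^ 'n) set) \<Rightarrow> bool" where
  "generic_kernel_pattern k T \<longleftrightarrow>
     (\<forall>\<Omega>. \<Omega> \<subseteq> {1..k} \<and> \<Omega> \<noteq> {} \<longrightarrow>
        vec.dim (\<Inter>j\<in>\<Omega>. T j) \<le> k - card \<Omega>)"

text \<open>Start offset of the block of copies of V_i: the copies of V_i occupy positions
  offset + 1 .. offset + delta i.\<close>
definition block_offset :: "(nat \<Rightarrow> nat) \<Rightarrow> nat \<Rightarrow> nat" where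
  "block_offset \<delta> i = (\<Sum>m\<in>{1..<i}. \<delta> m)"

definition kernel_tuple ::
  "(nat \<Rightarrow> ('a::field ^ 'n) set) \<Rightarrow> (nat \<Rightarrow> nat) \<Rightarrow> nat \<Rightarrow> nat \<Rightarrow> ('a ^ 'n) set" where
  "kernel_tuple V \<delta> l j =
     (if \<exists>i\<in>{1..l}. block_offset \<delta> i < j \<and> j \<le> block_offset \<delta> i + \<delta> i
      then V (THE i. i \<in> {1..l} \<and> block_offset \<delta> i < j \<and> j \<le> block_offset \<delta> i + \<delta> i)
      else {0})"

end

theory Submission
  imports Defs
begin

lemma off_Suc: "i \<ge> 1 \<Longrightarrow> block_offset \<delta> (Suc i) = block_offset \<delta> i + \<delta> i"
  unfolding block_offset_def by (simp add: sum.atLeastLessThan_Suc)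

lemma off_mono: "i \<le> i' \<Longrightarrow> block_offset \<delta> i \<le> block_offset \<delta> i'"
  unfolding block_offset_def by (rule sum_mono2) auto

lemma off_le: "1 \<le> i \<Longrightarrow> i < i' \<Longrightarrow> block_offset \<delta> i + \<delta> i \<le> block_offset \<delta> i'"
  using off_Suc[of i \<delta>] off_mono[of "Suc i" i' \<delta>] by simp

lemma off_top: "i \<in> {1..l} \<Longrightarrow> block_offset \<delta> i + \<delta> i \<le> (\<Sum>m\<in>{1..l}. \<delta> m)"
proof -
  assume i: "i \<in> {1..l}"
  have "block_offset \<delta> i + \<delta> i = (\<Sum>m\<in>{1..<Suc i}. \<delta> m)"
    using off_Suc[of i \<delta>] i unfolding block_offset_def by simp
  also have "\<dots> \<le> (\<Sum>m\<in>{1..l}. \<delta> m)" by (rule sum_mono2) (use i in auto)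
  finally show ?thesis .
qed

definition blk :: "(nat \<Rightarrow> nat) \<Rightarrow> nat \<Rightarrow> nat set" where
  "blk \<delta> i = {block_offset \<delta> i + 1 .. block_offset \<delta> i + \<delta> i}"

lemma blk_disj: "i \<in> {1..l} \<Longrightarrow> i' \<in> {1..l} \<Longrightarrow> i \<noteq> i' \<Longrightarrow> blk \<delta> i \<inter> blk \<delta> i' = {}"
proof -
  assume a: "i \<in> {1..l}" "i' \<in> {1..l}" "i \<noteq> i'"
  show ?thesis
  proof (cases "i < i'")
    case True thus ?thesis using off_le[of i i' \<delta>] a unfolding blk_def by auto
  next
    case False thus ?thesis using off_le[of i' i \<delta>] a unfolding blk_def by auto
  qed
qed

lemma kt_in: "i \<in> {1..l} \<Longrightarrow> j \<in> blk \<delta> i \<Longrightarrow> kernel_tuple V \<delta> l j = V i"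
proof -
  assume a: "i \<in> {1..l}" "j \<in> blk \<delta> i"
  have P: "block_offset \<delta> i < j \<and> j \<le> block_offset \<delta> i + \<delta> i" using a unfolding blk_def by auto
  have U: "(THE i. i \<in> {1..l} \<and> block_offset \<delta> i < j \<and> j \<le> block_offset \<delta> i + \<delta> i) = i"
  proof (rule the_equality)
    show "i \<in> {1..l} \<and> block_offset \<delta> i < j \<and> j \<le> block_offset \<delta> i + \<delta> i" using a P by auto
  next
    fix i' assume "i' \<in> {1..l} \<and> block_offset \<delta> i' < j \<and> j \<le> block_offset \<delta> i' + \<delta> i'"
    hence "j \<in> blk \<delta> i'" "i' \<in> {1..l}" unfolding blk_def by auto
    thus "i' = i" using blk_disj[of i l i' \<delta>] a by auto
  qed
  show ?thesis unfolding kernel_tuple_def using a P U by auto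
qed

lemma kt_out: "(\<forall>i\<in>{1..l}. j \<notin> blk \<delta> i) \<Longrightarrow> kernel_tuple V \<delta> l j = {0}"
  unfolding kernel_tuple_def blk_def by auto

lemma card_blk: "card (blk \<delta> i) = \<delta> i" unfolding blk_def by simp

lemma card_UN_blk: "S \<subseteq> {1..l} \<Longrightarrow> card (\<Union>i\<in>S. blk \<delta> i) = (\<Sum>i\<in>S. \<delta> i)"
proof -
  assume S: "S \<subseteq> {1..l}"
  have "finite S" using S finite_subset by blast
  hence "card (\<Union>i\<in>S. blk \<delta> i) = (\<Sum>i\<in>S. card (blk \<delta> i))"
  proof (intro card_UN_disjoint)
    show "\<forall>i\<in>S. finite (blk \<delta> i)" by (simp add: blk_def)
    show "\<forall>i\<in>S. \<forall>j\<in>S. i \<noteq> j \<longrightarrow> blk \<delta> i \<inter> blk \<delta> j = {}"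
      using S blk_disj[of _ l _ \<delta>] by blast
  qed (rule \<open>finite S\<close>)
  thus ?thesis by (simp add: card_blk)
qed

theorem mainTheorem13:
  fixes V :: "nat \<Rightarrow> ('a::{finite,field} ^ 'n) set"
    and \<delta> :: "nat \<Rightarrow> nat"
    and k l :: nat
  assumes "k \<le> CARD('n)"
    and "\<And>i. i \<in> {1..l} \<Longrightarrow> vec.subspace (V i)"
    and "\<And>i. i \<in> {1..l} \<Longrightarrow> vec.dim (V i) \<le> k"
  shows "(\<forall>\<Omega>. \<Omega> \<subseteq> {1..l} \<and> \<Omega> \<noteq> {} \<longrightarrow>
            int (vec.dim (\<Inter>i\<in>\<Omega>. V i)) \<le> int k - int (\<Sum>i\<in>\<Omega>. \<delta> i))
     \<longleftrightarrow> ((\<Sum>i\<in>{1..l}. \<delta> i) \<le> k \<and> generic_kernel_pattern k (kernel_tuple V \<delta> l))"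
proof
  assume H: "\<forall>\<Omega>. \<Omega> \<subseteq> {1..l} \<and> \<Omega> \<noteq> {} \<longrightarrow>
            int (vec.dim (\<Inter>i\<in>\<Omega>. V i)) \<le> int k - int (\<Sum>i\<in>\<Omega>. \<delta> i)"
  have sumk: "(\<Sum>i\<in>{1..l}. \<delta> i) \<le> k"
  proof (cases "l = 0")
    case True thus ?thesis by simp
  next
    case False
    hence "{1..l} \<noteq> ({}::nat set)" by simp
    hence "int (vec.dim (\<Inter>i\<in>{1..l}. V i)) \<le> int k - int (\<Sum>i\<in>{1..l}. \<delta> i)"
      using H by blast
    thus ?thesis by linarith
  qed
  show "(\<Sum>i\<in>{1..l}. \<delta> i) \<le> k \<and> generic_kernel_pattern k (kernel_tuple V \<delta> l)"
  proof (intro conjI sumk)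
    show "generic_kernel_pattern k (kernel_tuple V \<delta> l)"
      unfolding generic_kernel_pattern_def
    proof (intro allI impI, elim conjE)
      fix O' :: "nat set" assume O': "O' \<subseteq> {1..k}" "O' \<noteq> {}"
      let ?T = "kernel_tuple V \<delta> l"
      show "vec.dim (\<Inter>j\<in>O'. ?T j) \<le> k - card O'"
      proof (cases "\<exists>j\<in>O'. \<forall>i\<in>{1..l}. j \<notin> blk \<delta> i")
        case True
        then obtain j where j: "j \<in> O'" "\<forall>i\<in>{1..l}. j \<notin> blk \<delta> i" by blast
        have "(\<Inter>j\<in>O'. ?T j) \<subseteq> {0}" using j kt_out[of l j \<delta> V] by blast
        hence "vec.dim (\<Inter>j\<in>O'. ?T j) = 0" by (rule vec.dim_eq_0[THEN iffD2])
        thus ?thesis by (simp del: vec.dim_eq_0)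
      next
        case False
        hence cov: "\<forall>j\<in>O'. \<exists>i\<in>{1..l}. j \<in> blk \<delta> i" by blast
        define S where "S = {i\<in>{1..l}. blk \<delta> i \<inter> O' \<noteq> {}}"
        have Ssub: "S \<subseteq> {1..l}" unfolding S_def by auto
        have Sne: "S \<noteq> {}" using O'(2) cov unfolding S_def by blast
        have sub: "(\<Inter>j\<in>O'. ?T j) \<subseteq> (\<Inter>i\<in>S. V i)"
        proof
          fix x assume x: "x \<in> (\<Inter>j\<in>O'. ?T j)"
          show "x \<in> (\<Inter>i\<in>S. V i)"
          proof
            fix i assume i: "i \<in> S"
            then obtain j where "j \<in> blk \<delta> i" "j \<in> O'" "i \<in> {1..l}" unfolding S_def by blast
            thus "x \<in> V i" using x kt_in[of i l j \<delta> V] by auto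
          qed
        qed
        have Ocov: "O' \<subseteq> (\<Union>i\<in>S. blk \<delta> i)" using cov unfolding S_def by blast
        have "card O' \<le> card (\<Union>i\<in>S. blk \<delta> i)"
          by (rule card_mono[OF _ Ocov]) (use Ssub finite_subset[OF Ssub] in \<open>simp add: blk_def\<close>)
        also have "\<dots> = (\<Sum>i\<in>S. \<delta> i)" using card_UN_blk[OF Ssub] .
        finally have c: "card O' \<le> (\<Sum>i\<in>S. \<delta> i)" .
        have d: "int (vec.dim (\<Inter>i\<in>S. V i)) \<le> int k - int (\<Sum>i\<in>S. \<delta> i)"
          using H Ssub Sne by blast
        have "vec.dim (\<Inter>j\<in>O'. ?T j) \<le> vec.dim (\<Inter>i\<in>S. V i)" using sub vec.dim_subset by blast
        thus ?thesis using c d by linarith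
      qed
    qed
  qed
next
  assume R: "(\<Sum>i\<in>{1..l}. \<delta> i) \<le> k \<and> generic_kernel_pattern k (kernel_tuple V \<delta> l)"
  let ?T = "kernel_tuple V \<delta> l"
  show "\<forall>\<Omega>. \<Omega> \<subseteq> {1..l} \<and> \<Omega> \<noteq> {} \<longrightarrow>
            int (vec.dim (\<Inter>i\<in>\<Omega>. V i)) \<le> int k - int (\<Sum>i\<in>\<Omega>. \<delta> i)"
  proof (intro allI impI, elim conjE)
    fix \<Omega> :: "nat set" assume Om: "\<Omega> \<subseteq> {1..l}" "\<Omega> \<noteq> {}"
    have fin: "finite \<Omega>" using Om finite_subset by blast
    have sOm: "(\<Sum>i\<in>\<Omega>. \<delta> i) \<le> (\<Sum>i\<in>{1..l}. \<delta> i)" by (rule sum_mono2) (use Om in auto)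
    define O' where "O' = (\<Union>i\<in>\<Omega>. blk \<delta> i)"
    have cO: "card O' = (\<Sum>i\<in>\<Omega>. \<delta> i)" unfolding O'_def using card_UN_blk[OF Om(1)] .
    show "int (vec.dim (\<Inter>i\<in>\<Omega>. V i)) \<le> int k - int (\<Sum>i\<in>\<Omega>. \<delta> i)"
    proof (cases "O' = {}")
      case True
      hence "(\<Sum>i\<in>\<Omega>. \<delta> i) = 0" using cO by simp
      moreover obtain i where i: "i \<in> \<Omega>" using Om by blast
      moreover have "vec.dim (\<Inter>i\<in>\<Omega>. V i) \<le> vec.dim (V i)" using i vec.dim_subset by (metis INT_lower)
      moreover have "vec.dim (V i) \<le> k" using assms(3) i Om by blast
      ultimately show ?thesis by simp
    next
      case False
      have Osub: "O' \<subseteq> {1..k}"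
      proof
        fix j assume "j \<in> O'"
        then obtain i where "i \<in> \<Omega>" "j \<in> blk \<delta> i" unfolding O'_def by blast
        thus "j \<in> {1..k}" using off_top[of i l \<delta>] Om sOm R unfolding blk_def by auto
      qed
      have g: "vec.dim (\<Inter>j\<in>O'. ?T j) \<le> k - card O'"
        using R Osub False unfolding generic_kernel_pattern_def by blast
      have sub: "(\<Inter>i\<in>\<Omega>. V i) \<subseteq> (\<Inter>j\<in>O'. ?T j)"
      proof
        fix x assume x: "x \<in> (\<Inter>i\<in>\<Omega>. V i)"
        show "x \<in> (\<Inter>j\<in>O'. ?T j)"
        proof
          fix j assume "j \<in> O'"
          then obtain i where i: "i \<in> \<Omega>" "j \<in> blk \<delta> i" unfolding O'_def by blast
          thus "x \<in> ?T j" using x kt_in[of i l j \<delta> V] Om by auto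
        qed
      qed
      have "vec.dim (\<Inter>i\<in>\<Omega>. V i) \<le> vec.dim (\<Inter>j\<in>O'. ?T j)" using sub vec.dim_subset by blast
      thus ?thesis using g cO sOm R by linarith
    qed
  qed
qed

end
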